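(* Let $v\geq 7$ and let $C_v$ be the configuration on $\mathbb{Z}_v$ with blocks $\{m,m+1,m+3\}$, $m\in\mathbb{Z}_v$. Then its strong chromatic number is \[\chi_s(C_v)=\begin{cases}7&\text{if } v=7,\\ 6&\text{if } v=11,\\ 5&\text{if } v\equiv 1,2,3\pmod 4,\ v\notin\{7,11\},\\ 4&\text{if } v\equiv 0\pmod 4.\end{cases}\]
   Context: A strong colouring of a configuration is an assignment of colours to points such that the three points of every block receive three distinct colours; the strong chromatic number $\chi_s$ is the minimum number of colours in a strong colouring. *)

theory Defs
  imports Main
begin

definition strong_colouring :: "'a set \<Rightarrow> 'a set set \<Rightarrow> nat \<Rightarrow> ('a \<Rightarrow> nat) \<Rightarrow> bool" where
  "strong_colouring P B k c \<longleftrightarrow> (\<forall>x\<in>P. c x < k) \<and> (\<forall>b\<in>B. inj_on c b)"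

definition strong_chromatic_number :: "'a set \<Rightarrow> 'a set set \<Rightarrow> nat" where
  "strong_chromatic_number P B = (LEAST k. \<exists>c. strong_colouring P B k c)"

definition Cv_points :: "nat \<Rightarrow> nat set" where
  "Cv_points v = {..<v}"

definition Cv_blocks :: "nat \<Rightarrow> nat set set" where
  "Cv_blocks v = {{m, (m + 1) mod v, (m + 3) mod v} | m. m < v}"

end

theory Submission
  imports Defs
begin

lemma mod_wrap:
  fixes x v d :: nat
  assumes "x < v" "d \<le> v"
  shows "(x+d) mod v = (if x+d<v then x+d else x+d-v)"
proof (cases "x+d<v")
  case True then show ?thesis by simp
next
  case False
  then have "(x+d) mod v = (x+d-v) mod v" by (simp add: mod_if)
  also have "\<dots> = x+d-v" using assms False by simp
  finally show ?thesis using False by simp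
qed

lemma sc_iff:
  assumes v: "v \<ge> 7"
  shows "strong_colouring (Cv_points v) (Cv_blocks v) k c \<longleftrightarrow>
    (\<forall>x<v. c x < k) \<and> (\<forall>x<v. \<forall>d::nat. 1 \<le> d \<and> d \<le> 3 \<longrightarrow> c x \<noteq> c ((x+d) mod v))"
proof
  assume H: "(\<forall>x<v. c x < k) \<and> (\<forall>x<v. \<forall>d::nat. 1 \<le> d \<and> d \<le> 3 \<longrightarrow> c x \<noteq> c ((x+d) mod v))"
  show "strong_colouring (Cv_points v) (Cv_blocks v) k c"
    unfolding strong_colouring_def
  proof (intro conjI ballI)
    fix x assume "x \<in> Cv_points v" then show "c x < k" using H by (simp add: Cv_points_def)
  next
    fix b assume "b \<in> Cv_blocks v"
    then obtain m where m: "m < v" "b = {m, (m+1) mod v, (m+3) mod v}"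
      unfolding Cv_blocks_def by blast
    have H2: "\<And>x d. x < v \<Longrightarrow> 1 \<le> d \<Longrightarrow> d \<le> 3 \<Longrightarrow> c x \<noteq> c ((x+d) mod v)"
      using H by blast
    have 1: "c m \<noteq> c ((m+1) mod v)" using H2[of m 1] m by simp
    have 2: "c m \<noteq> c ((m+3) mod v)" using H2[of m 3] m by simp
    have "((m+1) mod v + 2) mod v = (m+3) mod v"
    proof -
      have "((m+1) mod v + 2) mod v = (m+1+2) mod v" by (rule mod_add_left_eq)
      also have "m+1+2 = m+3" by simp
      finally show ?thesis .
    qed
    moreover have "(m+1) mod v < v" using v by simp
    ultimately have 3: "c ((m+1) mod v) \<noteq> c ((m+3) mod v)" using H2[of "(m+1) mod v" 2]
      by simp
    show "inj_on c b" unfolding m(2) inj_on_def using 1 2 3 by auto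
  qed
next
  assume S: "strong_colouring (Cv_points v) (Cv_blocks v) k c"
  have ne: "(x+d) mod v \<noteq> x" if "x < v" "1 \<le> d" "d \<le> 3" for x d
    using mod_wrap[of x v d] that v by auto
  have inj: "inj_on c {m, (m+1) mod v, (m+3) mod v}" if "m < v" for m
    using S that unfolding strong_colouring_def Cv_blocks_def by blast
  show "(\<forall>x<v. c x < k) \<and> (\<forall>x<v. \<forall>d::nat. 1 \<le> d \<and> d \<le> 3 \<longrightarrow> c x \<noteq> c ((x+d) mod v))"
  proof (intro conjI allI impI)
    fix x assume "x < v" then show "c x < k" using S by (simp add: strong_colouring_def Cv_points_def)
  next
    fix x d :: nat assume x: "x < v" and d: "1 \<le> d \<and> d \<le> 3"
    have nx: "(x+d) mod v \<noteq> x" using ne x d by auto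
    consider "d = 1" | "d = 2" | "d = 3" using d by linarith
    then show "c x \<noteq> c ((x+d) mod v)"
    proof cases
      case 1 then show ?thesis using inj_onD[OF inj[OF x], of x "(x+1) mod v"] nx by auto
    next
      case 3 then show ?thesis using inj_onD[OF inj[OF x], of x "(x+3) mod v"] nx by auto
    next
      case 2
      define m where "m = (x+v-1) mod v"
      have mv: "m < v" using v by (simp add: m_def)
      have e1: "(m+1) mod v = x"
      proof -
        have "(m+1) mod v = (x+v-1+1) mod v" unfolding m_def by (rule mod_add_left_eq)
        also have "x+v-1+1 = x + v" using v by simp
        finally show ?thesis using x by simp
      qed
      have e3: "(m+3) mod v = (x+2) mod v"
      proof -
        have "(m+3) mod v = (x+v-1+3) mod v" unfolding m_def by (simp add: mod_add_left_eq)
        also have "x+v-1+3 = (x+2) + v" using v by simp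
        also have "((x+2) + v) mod v = (x+2) mod v" by (rule mod_add_self2)
        finally show ?thesis .
      qed
      show ?thesis using inj_onD[OF inj[OF mv], of "(m+1) mod v" "(m+3) mod v"] nx 2 e1 e3 by auto
    qed
  qed
qed

abbreviation "SC v k c \<equiv> strong_colouring (Cv_points v) (Cv_blocks v) k c"

lemma same_col:
  assumes v: "v \<ge> 7" and S: "SC v k c" and xy: "x < v" "y < v" "x \<noteq> y" "c x = c y"
  shows "(x+4 \<le> y \<and> y+4 \<le> x+v) \<or> (y+4 \<le> x \<and> x+4 \<le> y+v)"
proof -
  have H: "\<And>x d. x < v \<Longrightarrow> 1 \<le> d \<Longrightarrow> d \<le> 3 \<Longrightarrow> c x \<noteq> c ((x+d) mod v)"
    using S[unfolded sc_iff[OF v]] by blast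
  have gen: "(a+4 \<le> b \<and> b+4 \<le> a+v)" if ab: "a < b" "b < v" "c a = c b" for a b
  proof (rule ccontr)
    assume "\<not> ?thesis"
    then consider "b - a \<le> 3" | "a + v - b \<le> 3" using ab by linarith
    then show False
    proof cases
      case 1
      have "(a + (b-a)) mod v = b" using ab by simp
      moreover have "1 \<le> b - a" using ab by simp
      ultimately show False using H[of a "b-a"] ab 1 by simp
    next
      case 2
      have "(b + (a+v-b)) mod v = a" using ab by simp
      moreover have "1 \<le> a+v-b" using ab by simp
      ultimately show False using H[of b "a+v-b"] ab 2 by simp
    qed
  qed
  show ?thesis
  proof (cases "x < y")
    case True then show ?thesis using gen[of x y] xy by simp
  next
    case False then have "y < x" using xy by simp
    then show ?thesis using gen[of y x] xy by simp
  qed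
qed

lemma lower4:
  assumes v: "v \<ge> 7" and S: "SC v k c"
  shows "4 \<le> k"
proof -
  have inj: "inj_on c {0,1,2,3}"
  proof (rule inj_onI)
    fix x y assume "x \<in> {0::nat,1,2,3}" "y \<in> {0::nat,1,2,3}" "c x = c y"
    then show "x = y" using same_col[OF v S, of x y] v by auto
  qed
  have "c ` {0,1,2,3} \<subseteq> {..<k}" using S v by (auto simp: strong_colouring_def Cv_points_def)
  from card_inj_on_le[OF inj this] show ?thesis by simp
qed

lemma lower7:
  assumes S: "SC 7 k c"
  shows "7 \<le> k"
proof -
  have inj: "inj_on c {..<7}"
  proof (rule inj_onI)
    fix x y assume "x \<in> {..<7::nat}" "y \<in> {..<7::nat}" "c x = c y"
    then have "x < 7" "y < 7" "c x = c y" by auto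
    then show "x = y" using same_col[OF _ S, of x y] by (cases "x = y") (simp, arith)
  qed
  have "c ` {..<7} \<subseteq> {..<k}" using S by (auto simp: strong_colouring_def Cv_points_def)
  from card_inj_on_le[OF inj this] show ?thesis by simp
qed

lemma pig: "(a::nat)<4 \<Longrightarrow> b<4 \<Longrightarrow> c<4 \<Longrightarrow> d<4 \<Longrightarrow> e<4 \<Longrightarrow>
  a\<noteq>b \<Longrightarrow> a\<noteq>c \<Longrightarrow> a\<noteq>d \<Longrightarrow> b\<noteq>c \<Longrightarrow> b\<noteq>d \<Longrightarrow> c\<noteq>d \<Longrightarrow> b\<noteq>e \<Longrightarrow> c\<noteq>e \<Longrightarrow> d\<noteq>e \<Longrightarrow> a = e"
proof -
  assume h: "a<4" "b<4" "c<4" "d<4" "e<4" "a\<noteq>b" "a\<noteq>c" "a\<noteq>d" "b\<noteq>c" "b\<noteq>d" "c\<noteq>d" "b\<noteq>e" "c\<noteq>e" "d\<noteq>e"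
  have "{a,b,c,d} \<subseteq> {..<4}" using h by auto
  moreover have "card {a,b,c,d} = card {..<(4::nat)}" using h by simp
  ultimately have "{a,b,c,d} = {..<4}" by (simp add: card_subset_eq)
  then have "e \<in> {a,b,c,d}" using h by auto
  then show "a = e" using h by auto
qed

lemma lower5:
  assumes v: "v \<ge> 7" and S: "SC v 4 c" and r: "v mod 4 \<noteq> 0"
  shows False
proof -
  have rng: "\<And>x. x < v \<Longrightarrow> c x < 4" using S by (auto simp: strong_colouring_def Cv_points_def)
  have per: "x < v \<longrightarrow> c x = c (x mod 4)" for x
  proof (induction x rule: less_induct)
    case (less x)
    show ?case
    proof (cases "x < 4")
      case True then show ?thesis by simp
    next
      case False
      show ?thesis
      proof
        assume xv: "x < v"
        have d: "c (x-i) \<noteq> c (x-j)" if "i<j" "j \<le> 4" "j - i \<le> 3" for i j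
        proof
          assume "c (x-i) = c (x-j)"
          then have "(x-i+4 \<le> x-j \<and> x-j+4 \<le> x-i+v) \<or> (x-j+4 \<le> x-i \<and> x-i+4 \<le> x-j+v)"
            using same_col[OF v S, of "x-i" "x-j"] that xv False by auto
          then show False using that False by auto
        qed
        have r: "c (x-j) < 4" for j using rng[of "x-j"] xv by simp
        have "c x = c (x-4)"
          using d[of 0 1] d[of 0 2] d[of 0 3] d[of 1 2] d[of 1 3] d[of 2 3] d[of 1 4] d[of 2 4] d[of 3 4]
            r[of 0] r[of 1] r[of 2] r[of 3] r[of 4]
          pig[of "c x" "c (x-1)" "c (x-2)" "c (x-3)" "c (x-4)"] by simp
        moreover have "c (x-4) = c ((x-4) mod 4)" using less[of "x-4"] False xv by simp
        moreover have "(x-4) mod 4 = x mod 4" using False by (simp add: mod_if)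
        ultimately show "c x = c (x mod 4)" by simp
      qed
    qed
  qed
  define y where "y = v - v mod 4"
  have y1: "y < v" using r v unfolding y_def by simp
  have y2: "y mod 4 = 0" unfolding y_def by presburger
  have y3: "0 + v - y \<le> 3" unfolding y_def by simp
  have y4: "y \<noteq> 0" unfolding y_def using v by presburger
  note y = y1 y2 y3 y4
  have "c y = c 0" using per[of y] y by simp
  then show False using same_col[OF v S, of 0 y] y by auto
qed

lemma lower6:
  assumes S: "SC 11 k c" and k: "k \<le> 5"
  shows False
proof -
  define A where "A i = {x\<in>{..<11::nat}. c x = i}" for i
  have rng: "\<And>x. x < 11 \<Longrightarrow> c x < 5" using S k unfolding strong_colouring_def Cv_points_def
    by (meson lessThan_iff order_less_le_trans)
  have sub: "{..<11} \<subseteq> (\<Union>i\<in>{..<5}. A i)" using rng unfolding A_def by auto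
  have "\<exists>i. 3 \<le> card (A i)"
  proof (rule ccontr)
    assume "\<not> ?thesis"
    then have "\<And>i. card (A i) < 3" by (simp add: not_le)
    then have le: "\<And>i. card (A i) \<le> 2" by (simp add: less_Suc_eq_le numeral_3_eq_3 numeral_2_eq_2)
    have "card {..<11::nat} \<le> card (\<Union>i\<in>{..<5::nat}. A i)"
      by (rule card_mono[OF _ sub]) (auto simp: A_def)
    also have "\<dots> \<le> (\<Sum>i\<in>{..<5::nat}. card (A i))" by (rule card_UN_le) simp
    also have "\<dots> \<le> card {..<5::nat} * 2" using sum_bounded_above[of "{..<5::nat}" "\<lambda>i. card (A i)" 2] le by simp
    finally show False by simp
  qed
  then obtain i where "3 \<le> card (A i)" by blast
  then obtain T where T: "T \<subseteq> A i" "card T = 3" by (metis obtain_subset_with_card_n)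
  then obtain x y z where xyz: "T = {x,y,z}" "x \<noteq> y" "y \<noteq> z" "x \<noteq> z" by (auto simp: card_3_iff)
  then have m: "x < 11" "y < 11" "z < 11" "c x = i" "c y = i" "c z = i" using T(1) by (auto simp: A_def)
  have p1: "(x+4 \<le> y \<and> y+4 \<le> x+11) \<or> (y+4 \<le> x \<and> x+4 \<le> y+11)"
    using same_col[OF _ S, of x y] m xyz by simp
  have p2: "(x+4 \<le> z \<and> z+4 \<le> x+11) \<or> (z+4 \<le> x \<and> x+4 \<le> z+11)"
    using same_col[OF _ S, of x z] m xyz by simp
  have p3: "(y+4 \<le> z \<and> z+4 \<le> y+11) \<or> (z+4 \<le> y \<and> y+4 \<le> z+11)"
    using same_col[OF _ S, of y z] m xyz by simp
  show False using p1 p2 p3 m(1-3) by (elim disjE conjE) linarith+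
qed

lemma colour_crit:
  assumes v: "v \<ge> 7" and rng: "\<And>x. x < v \<Longrightarrow> f x < k"
    and ok: "\<And>x d. x < v \<Longrightarrow> 1 \<le> d \<Longrightarrow> d \<le> 3 \<Longrightarrow>
       f x \<noteq> f (if x + d < v then x + d else x + d - v)"
  shows "SC v k f"
proof -
  have "\<forall>x<v. \<forall>d::nat. 1 \<le> d \<and> d \<le> 3 \<longrightarrow> f x \<noteq> f ((x+d) mod v)"
  proof (intro allI impI)
    fix x d :: nat assume x: "x < v" and d: "1 \<le> d \<and> d \<le> 3"
    have "d \<le> v" using d v by linarith
    then have e: "(x+d) mod v = (if x+d<v then x+d else x+d-v)" by (rule mod_wrap[OF x])
    show "f x \<noteq> f ((x + d) mod v)" unfolding e using ok[of x d] x d by blast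
  qed
  moreover have "\<forall>x<v. f x < k" using rng by blast
  ultimately show ?thesis using sc_iff[OF v] by blast
qed

lemma up4:
  assumes v: "v \<ge> 7" and r: "v mod 4 = 0"
  shows "SC v 4 (\<lambda>x. x mod 4)"
proof (rule colour_crit[OF v])
  fix x :: nat show "x mod 4 < 4" by simp
next
  fix x d :: nat assume x: "x < v" and d: "1 \<le> d" "d \<le> 3"
  obtain t where t: "v = 4 * t" using r by auto
  show "x mod 4 \<noteq> (if x + d < v then x + d else x + d - v) mod 4"
  proof (cases "x + d < v")
    have m: "x mod 4 \<noteq> (x + d) mod 4" using d by presburger
    case True then show ?thesis using m by simp
  next
    have m: "x mod 4 \<noteq> (x + d) mod 4" using d by presburger
    case False
    then obtain e where e: "x + d = v + e" using le_Suc_ex[of v "x+d"] by auto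
    have "(x+d) mod 4 = e mod 4" unfolding e t by simp
    then show ?thesis using m False e by simp
  qed
qed

lemma up7: "SC 7 7 (\<lambda>x. x)"
  by (rule colour_crit) auto

lemma up11: "SC 11 6 (\<lambda>x. if x = 10 then 5 else x mod 5)"
proof (rule colour_crit)
  have A: "\<forall>x\<in>{..<11::nat}. \<forall>d\<in>{1,2,3::nat}. (\<lambda>x. if x = 10 then 5 else x mod (5::nat)) x \<noteq> (\<lambda>x. if x = 10 then 5 else x mod 5) (if x + d < 11 then x + d else x + d - 11)"
    by (simp add: lessThan_nat_numeral)
  fix x d :: nat assume "x < 11" "1 \<le> d" "d \<le> 3"
  moreover then have "d \<in> {1,2,3}" by auto
  ultimately show "(if x = 10 then 5 else x mod 5) \<noteq> (\<lambda>x. if x = 10 then 5 else x mod 5) (if x + d < 11 then x + d else x + d - 11)"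
    using bspec[OF bspec[OF A], of x d] by simp
qed auto


lemma up5_arith: "1 \<le> (q::nat) \<Longrightarrow> q \<le> 3 \<Longrightarrow> 5*q \<le> v \<Longrightarrow> (v - 5*q) mod 4 = 0 \<Longrightarrow> x < v \<Longrightarrow> 1 \<le> d \<Longrightarrow> d \<le> 3 \<Longrightarrow>
  (\<lambda>x. if x < 5 * q then x mod 5 else (x - 5 * q) mod 4) x \<noteq>
  (\<lambda>x. if x < 5 * q then x mod 5 else (x - 5 * q) mod (4::nat)) (if x + d < v then x + d else x + d - v)"
proof -
  assume q: "1 \<le> q" "q \<le> 3" "5*q \<le> v" "(v - 5*q) mod 4 = 0" and x: "x < v" and d: "1 \<le> d" "d \<le> 3"
  define t where "t = (v - 5*q) div 4"
  have "v - 5*q = 4*t" unfolding t_def using div_mult_mod_eq[of "v-5*q" 4] q(4) by simp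
  then have t: "v = 5*q + 4*t" using q(3) by linarith
  show ?thesis
  proof (cases "x + d < v")
    case A: True
    show ?thesis
    proof (cases "x + d < 5*q")
      case True
      have "x mod 5 \<noteq> (x+d) mod 5" using d by presburger
      then show ?thesis using A True by simp
    next
      case F1: False
      show ?thesis
      proof (cases "x < 5*q")
        case False
        then obtain y where y: "x = 5*q + y" using le_Suc_ex[of "5*q" x] by auto
        have "y mod 4 \<noteq> (y+d) mod 4" using d by presburger
        then show ?thesis using A False y by (simp add: add.assoc)
      next
        case True
        define j where "j = 5*q - x"
        have j: "x + j = 5*q" "1 \<le> j" "j \<le> d" using F1 True unfolding j_def by linarith+
        have "x = 5*(q-1) + (5-j)" using j d q(1) by linarith
        then have "x mod 5 = (5-j) mod 5" by (metis mod_mult_self3 mult.commute)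
        then have "x mod 5 = 5 - j" using j d by simp
        moreover have "x + d - 5*q = d - j" using j by linarith
        moreover have "(d - j) mod 4 = d - j" using d by simp
        ultimately show ?thesis using A True F1 j d by simp
      qed
    qed
  next
    case B: False
    define j where "j = v - x"
    have j: "x + j = v" "1 \<le> j" "j \<le> d" using B x unfolding j_def by linarith+
    have y: "x + d - v = d - j" "d - j < 5*q" using j q d by linarith+
    show ?thesis
    proof (cases "x < 5*q")
      case False
      have "t \<ge> 1" using False x t by simp
      have "x - 5*q = 4*(t-1) + (4-j)" using j t d False \<open>t \<ge> 1\<close> by linarith
      then have "(x - 5*q) mod 4 = (4-j) mod 4" by (metis mod_mult_self3 mult.commute)
      then have "(x - 5*q) mod 4 = 4 - j" using j d by simp
      then show ?thesis using B False y j d by simp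
    next
      case True
      have "t = 0"
      proof (rule ccontr)
        assume "t \<noteq> 0" then have "t \<ge> 1" by simp
        then show False using j t d True by linarith
      qed
      have "x = 5*(q-1) + (5-j)" using j t d True q(1) x \<open>t = 0\<close> by linarith
      then have "x mod 5 = (5-j) mod 5" by (metis mod_mult_self3 mult.commute)
      then have "x mod 5 = 5 - j" using j d by simp
      then show ?thesis using B True y j d by simp
    qed
  qed
qed

lemma up5_q: "(v::nat) \<ge> 7 \<Longrightarrow> v mod 4 \<noteq> 0 \<Longrightarrow> v \<noteq> 7 \<Longrightarrow> v \<noteq> 11 \<Longrightarrow> 5 * (v mod 4) \<le> v"
proof -
  assume a: "v \<ge> 7" "v mod 4 \<noteq> 0" "v \<noteq> 7" "v \<noteq> 11"
  define q where "q = v div 4"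
  define r where "r = v mod 4"
  have v: "v = 4*q + r" unfolding q_def r_def by simp
  have r: "r < 4" "r \<noteq> 0" using a unfolding r_def by auto
  have "r \<le> q"
  proof (rule ccontr)
    assume "\<not> r \<le> q"
    then have "q < r" by simp
    then have "q = 0 \<or> q = 1 \<or> q = 2" using r by linarith
    moreover have "r = 1 \<or> r = 2 \<or> r = 3" using r by linarith
    ultimately show False using a v \<open>q < r\<close> by (elim disjE) simp_all
  qed
  then show ?thesis using v unfolding r_def[symmetric] by linarith
qed
lemma up5_q2: "(v - 5 * (v mod 4)) mod 4 = (0::nat)"
proof -
  define a where "a = v div 4"
  define b where "b = v mod 4"
  have v: "v = 4*a + b" unfolding a_def b_def by simp
  have "v - 5 * b = 4 * a - 4 * b" using v by linarith
  also have "\<dots> = 4 * (a - b)" by (simp add: diff_mult_distrib2)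
  finally have "v - 5 * (v mod 4) = 4 * (a - b)" unfolding b_def .
  then show ?thesis by simp
qed

lemma up5:
  assumes v: "v \<ge> 7" and r: "v mod 4 \<noteq> 0" and n7: "v \<noteq> 7" and n11: "v \<noteq> 11"
  shows "SC v 5 (\<lambda>x. if x < 5 * (v mod 4) then x mod 5 else (x - 5 * (v mod 4)) mod 4)"
proof (rule colour_crit[OF v])
  fix x :: nat
  have "(x - 5 * (v mod 4)) mod 4 < 4" by simp
  then have "(x - 5 * (v mod 4)) mod 4 < 5" by linarith
  then show "(if x < 5 * (v mod 4) then x mod 5 else (x - 5 * (v mod 4)) mod 4) < 5" by simp
next
  fix x d :: nat assume "x < v" "1 \<le> d" "d \<le> 3"
  moreover have "1 \<le> v mod 4" using r by simp
  moreover have "v mod 4 \<le> 3" by simp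
  ultimately show "(if x < 5 * (v mod 4) then x mod 5 else (x - 5 * (v mod 4)) mod 4) \<noteq>
    (\<lambda>x. if x < 5 * (v mod 4) then x mod 5 else (x - 5 * (v mod 4)) mod 4) (if x + d < v then x + d else x + d - v)"
    using up5_arith[of "v mod 4" v x d] up5_q[OF v r n7 n11] up5_q2[of v] by simp
qed

theorem mainTheorem16:
  fixes v :: nat
  assumes "v \<ge> 7"
  shows "strong_chromatic_number (Cv_points v) (Cv_blocks v) =
           (if v = 7 then 7
            else if v = 11 then 6
            else if v mod 4 = 0 then 4
            else 5)"
proof -
  note v = assms
  show ?thesis unfolding strong_chromatic_number_def
  proof (rule Least_equality)
    show "\<exists>c. SC v (if v = 7 then 7 else if v = 11 then 6 else if v mod 4 = 0 then 4 else 5) c"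
    proof (cases "v = 7")
      case True then show ?thesis using up7 by auto
    next
      case n7: False
      show ?thesis
      proof (cases "v = 11")
        case True then show ?thesis using up11 by auto
      next
        case n11: False
        show ?thesis
        proof (cases "v mod 4 = 0")
          case True
          then have h: "SC v 4 (\<lambda>x. x mod 4)" by (rule up4[OF v])
          have e: "(if v = 7 then 7 else if v = 11 then 6 else if v mod 4 = 0 then 4 else 5) = (4::nat)"
            using True n7 n11 by simp
          show ?thesis unfolding e using h by blast
        next
          case False
          have h: "\<exists>c. SC v 5 c" using up5[OF v False n7 n11] by blast
          have e: "(if v = 7 then 7 else if v = 11 then 6 else if v mod 4 = 0 then 4 else 5) = (5::nat)"
            using False n7 n11 by simp
          show ?thesis unfolding e using h by blast
        qed
      qed
    qed
  next
    fix k assume "\<exists>c. SC v k c"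
    then obtain c where S: "SC v k c" by blast
    have k4: "4 \<le> k" by (rule lower4[OF v S])
    show "(if v = 7 then 7 else if v = 11 then 6 else if v mod 4 = 0 then 4 else 5) \<le> k"
    proof (cases "v = 7")
      case True
      have "7 \<le> k" using lower7 S True by blast
      then show ?thesis using True by simp
    next
      case n7: False
      show ?thesis
      proof (cases "v = 11")
        case True
        have "\<not> k \<le> 5" using lower6[of k c] S True by blast
        then show ?thesis using True by simp
      next
        case n11: False
        show ?thesis
        proof (cases "v mod 4 = 0")
          case True then show ?thesis using k4 n7 n11 by simp
        next
          case False
          have "k \<noteq> 4" using lower5[OF v _ False, of c] S by blast
          then show ?thesis using k4 n7 n11 False by simp
        qed
      qed
    qed
  qed
qed

end
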